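(* Let $n\ge 2$ and let $a_1,\dots,a_n$ be positive integers. For $k\ge 1$ put $p_k=K(a_1,\dots,a_k)$, $q_k=K(a_2,\dots,a_k)$ and $r_k=K(a_3,\dots,a_k)$, so that $[a_1,\dots,a_n]=p_n/q_n$ and $[a_2,\dots,a_n]=q_n/r_n$. Then \[ [a_n,\dots,a_2,a_1,a_2,\dots,a_n]=\frac{p_n^2-r_n^2}{p_{n-1}p_n-r_{n-1}r_n}. \]
   Context: $[b_1,\dots,b_k]=b_1+\cfrac{1}{b_2+\cfrac{1}{\ddots+\cfrac{1}{b_k}}}$ denotes a continued fraction. For positive integers $a_i,\dots,a_j$, $K(a_i,\dots,a_j)$ denotes the continuant, i.e. the numerator of $[a_i,\dots,a_j]$ written in lowest terms; by convention $K(a_i,\dots,a_j)=1$ if $j=i-1$ (empty sequence) and $K(a_i,\dots,a_j)=0$ if $j=i-2$. *)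

theory Defs
  imports Complex_Main
begin

fun cfrac :: "nat list \<Rightarrow> rat" where
  "cfrac [] = 0"
| "cfrac [b] = of_nat b"
| "cfrac (b # c # bs) = of_nat b + 1 / cfrac (c # bs)"

text \<open>Continuant K(a_i,...,a_j) of the sequence a: numerator of [a_i,...,a_j] in lowest
  terms; 1 for the empty sequence (j = i - 1) and 0 when j = i - 2.\<close>
definition K :: "(nat \<Rightarrow> nat) \<Rightarrow> nat \<Rightarrow> nat \<Rightarrow> int" where
  "K a i j = (if j + 1 = i then 1
              else if j + 2 = i then 0
              else fst (quotient_of (cfrac (map a [i..<Suc j]))))"

end

theory Submission
  imports Defs
begin

fun cont :: "nat list \<Rightarrow> int" where
  "cont [] = 1"
| "cont [b] = int b"
| "cont (b # c # bs) = int b * cont (c # bs) + cont bs"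

definition kb :: "nat list \<Rightarrow> int" where
  "kb xs = (if xs = [] then 0 else cont (butlast xs))"

lemma kb_cons2: "kb (b # c # zs) = int b * kb (c # zs) + kb zs"
  by (cases zs) (auto simp: kb_def)

lemma cont_append: "ys \<noteq> [] \<Longrightarrow> cont (xs @ ys) = cont xs * cont ys + kb xs * cont (tl ys)"
proof (induction xs rule: cont.induct)
  case 1
  then show ?case by (simp add: kb_def)
next
  case (2 b)
  then show ?case by (cases ys rule: cont.cases) (auto simp: kb_def)
next
  case (3 b c bs)
  then show ?case by (simp add: kb_cons2 algebra_simps)
qed

lemma cont_rev: "cont (rev xs) = cont xs"
proof (induction xs rule: cont.induct)
  case (3 b c bs)
  have "cont (rev (b # c # bs)) = cont (rev (c # bs) @ [b])" by simp
  also have "\<dots> = cont (rev (c#bs)) * int b + kb (rev (c#bs))"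
    by (subst cont_append) auto
  also have "kb (rev (c#bs)) = cont bs" using 3 by (simp add: kb_def butlast_rev)
  finally show ?case using 3 by (simp add: algebra_simps)
qed auto

lemma cont_pos: "\<forall>x\<in>set xs. x > 0 \<Longrightarrow> cont xs \<ge> 1"
proof (induction xs rule: cont.induct)
  case (3 b c bs)
  then have "int b * cont (c # bs) \<ge> 1 * 1"
    by (intro mult_mono) auto
  with 3 show ?case by simp
qed auto

lemma cont_coprime: "coprime (cont xs) (cont (tl xs))"
proof (induction xs rule: cont.induct)
  case (3 b c bs)
  then have "coprime (cont bs) (cont (c # bs))" by (simp add: coprime_commute)
  then have "coprime (cont bs + int b * cont (c # bs)) (cont (c # bs))"
    by (meson coprime_def dvd_add_left_iff dvd_mult)
  then show ?case by (simp add: add.commute)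
qed auto

lemma cfrac_cont: "xs \<noteq> [] \<Longrightarrow> \<forall>x\<in>set xs. x > 0 \<Longrightarrow>
   cfrac xs = of_int (cont xs) / of_int (cont (tl xs))"
proof (induction xs rule: cfrac.induct)
  case (3 b c bs)
  have p: "cont (c # bs) \<ge> 1" using 3 cont_pos[of "c#bs"] by auto
  have "cfrac (b # c # bs) = of_nat b + 1 / (of_int (cont (c#bs)) / of_int (cont bs))"
    using 3 by simp
  also have "\<dots> = of_int (cont (b # c # bs)) / of_int (cont (c#bs))"
    using p by (simp add: field_simps)
  finally show ?case by simp
qed auto

lemma quot_cont: "xs \<noteq> [] \<Longrightarrow> \<forall>x\<in>set xs. x > 0 \<Longrightarrow>
   fst (quotient_of (cfrac xs)) = cont xs"
proof -
  assume a: "xs \<noteq> []" "\<forall>x\<in>set xs. x > 0"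
  have p: "cont (tl xs) \<ge> 1" using a cont_pos[of "tl xs"] by (cases xs) auto
  have "cfrac xs = Fract (cont xs) (cont (tl xs))"
    using cfrac_cont[OF a] by (simp add: Fract_of_int_quotient)
  then have "quotient_of (cfrac xs) = (cont xs, cont (tl xs))"
    using p cont_coprime[of xs] by (simp add: quotient_of_Fract normalize_stable)
  then show ?thesis by simp
qed

lemma K_cont: "i \<le> j + 1 \<Longrightarrow> (\<And>k. i \<le> k \<Longrightarrow> k \<le> j \<Longrightarrow> a k > 0) \<Longrightarrow>
   K a i j = cont (map a [i..<Suc j])"
  unfolding K_def by (auto intro!: quot_cont)

lemma K_kb: "i \<le> j + 1 \<Longrightarrow> 1 \<le> j \<Longrightarrow> (\<And>k. i \<le> k \<Longrightarrow> k \<le> j \<Longrightarrow> a k > 0) \<Longrightarrow>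
   K a i (j - 1) = kb (map a [i..<Suc j])"
proof -
  assume h: "i \<le> j + 1" "1 \<le> j" "\<And>k. i \<le> k \<Longrightarrow> k \<le> j \<Longrightarrow> a k > 0"
  show ?thesis
  proof (cases "i = j + 1")
    case True
    then show ?thesis using h by (simp add: K_def kb_def)
  next
    case False
    then have "K a i (j - 1) = cont (map a [i..<Suc (j - 1)])"
      using h by (intro K_cont) auto
    moreover have "butlast (map a [i..<Suc j]) = map a [i..<Suc (j-1)]"
      using h False by (simp add: map_butlast[symmetric])
    ultimately show ?thesis using False h by (simp add: kb_def)
  qed
qed

lemma kb_rev: "kb (rev zs) = (if zs = [] then 0 else cont (tl zs))"
  by (simp add: kb_def butlast_rev cont_rev)

theorem theorem3p15:
  fixes a :: "nat \<Rightarrow> nat" and n :: nat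
  assumes "n \<ge> 2"
    and "\<And>k. 1 \<le> k \<Longrightarrow> k \<le> n \<Longrightarrow> a k > 0"
  shows "cfrac (rev (map a [2..<Suc n]) @ [a 1] @ map a [2..<Suc n])
         = of_int ((K a 1 n)\<^sup>2 - (K a 3 n)\<^sup>2)
           / of_int (K a 1 (n - 1) * K a 1 n - K a 3 (n - 1) * K a 3 n)"
proof -
  define x where "x = map a [2..<Suc n]"
  define y where "y = a 1 # x"
  have y2: "y = map a [1..<Suc n]" using assms(1) unfolding y_def x_def
    by (simp add: upt_conv_Cons numeral_2_eq_2 numeral_3_eq_3)
  have tx: "tl x = map a [3..<Suc n]" using assms(1) unfolding x_def
    by (simp add: upt_conv_Cons numeral_2_eq_2 numeral_3_eq_3)
  have xne: "x \<noteq> []" using assms(1) unfolding x_def by simp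
  then obtain c zs where xc: "x = c # zs" by (cases x) auto
  have posy: "\<forall>v\<in>set y. v > 0" using assms(2) unfolding y2 by auto
  have posx: "\<forall>v\<in>set x. v > 0" using posy unfolding y_def by auto
  define A where "A = int (a 1)"
  have A0: "A > 0" using assms(2)[of 1] assms(1) unfolding A_def by auto
  define p where "p = cont y"
  define q where "q = cont x"
  define r where "r = cont (tl x)"
  define p' where "p' = kb y"
  define q' where "q' = kb x"
  define r' where "r' = kb (tl x)"
  have Kp: "K a 1 n = p" unfolding p_def y2 using assms by (intro K_cont) auto
  have Kr: "K a 3 n = r" unfolding r_def tx using assms by (intro K_cont) auto
  have Kp': "K a 1 (n - 1) = p'" unfolding p'_def y2 using assms by (intro K_kb) auto
  have Kr': "K a 3 (n - 1) = r'" unfolding r'_def tx using assms by (intro K_kb) auto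
  have pe: "p = A * q + r" unfolding p_def q_def r_def y_def A_def xc by simp
  have pe': "p' = A * q' + r'" unfolding p'_def q'_def r'_def y_def A_def xc
    by (simp add: kb_cons2)
  let ?s = "rev x @ y"
  have sne: "?s \<noteq> []" by (simp add: y_def)
  have poss: "\<forall>v\<in>set ?s. v > 0" using posx posy by auto
  have cs: "cont ?s = q * (p + r)"
    unfolding p_def q_def r_def
    by (subst cont_append) (auto simp: y_def cont_rev kb_rev xne algebra_simps)
  have ts: "tl ?s = rev (butlast x) @ y" using xne by (simp add: tl_append2) (metis butlast_rev rev_rev_ident)
  have kbr: "kb (rev (butlast x)) = r'"
    unfolding r'_def kb_rev xc by (cases zs) (auto simp: kb_def butlast_tl)
  have cq': "cont (rev (butlast x)) = q'" by (simp add: q'_def kb_def xne cont_rev)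
  have cts: "cont (tl ?s) = q' * p + r' * q"
    unfolding ts
    by (subst cont_append) (auto simp: y_def cq' kbr p_def q_def)
  have "cfrac ?s = of_int (q * (p + r)) / of_int (q' * p + r' * q)"
    using cfrac_cont[OF sne poss] cs cts by simp
  also have "\<dots> = of_int (A * (q * (p + r))) / of_int (A * (q' * p + r' * q))"
    using A0 by (simp only: of_int_mult mult_divide_mult_cancel_left_if) simp
  also have "A * (q * (p + r)) = p\<^sup>2 - r\<^sup>2" using pe by (simp add: power2_eq_square algebra_simps)
  also have "A * (q' * p + r' * q) = p' * p - r' * r" using pe pe' by (simp add: algebra_simps)
  finally have calc: "cfrac ?s = of_int (p\<^sup>2 - r\<^sup>2) / of_int (p' * p - r' * r)" .
  show ?thesis unfolding Kp Kr Kp' Kr' x_def[symmetric] using calc by (simp add: y_def)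
qed

end
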